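(* Let $A\in\mathbb{C}^{m\times m}$ be Hermitian positive semidefinite, let $B\in\mathbb{C}^{m\times k}$ be such that $B^*$ has full column rank (so $BB^*$ is positive definite), and let \[ H=\begin{bmatrix} A & B\\ B^* & 0\end{bmatrix}. \] Let $\alpha=\sup_{x\neq0}\dfrac{x^*Ax}{x^*\sqrt{BB^*}x}$ and $\beta_1=\min_{\|x\|=1}\|B^*x\|$. Then \[ \left(\frac{-2\beta_1}{\alpha+\sqrt{\alpha^2+4}},\ \beta_1\right)\setminus\{0\}\subseteq\rho(H). \]
   Context: $\rho(H)$ denotes the resolvent set of $H$ (the complement of its spectrum); $\sqrt{BB^*}$ is the positive definite square root. *)

theory Defs
  imports "HOL-Analysis.Analysis"
begin

definition adjoint_mat :: "complex^'n^'m \<Rightarrow> complex^'m^'n" where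
  "adjoint_mat A = (\<chi> i j. cnj (A $ j $ i))"

definition qform :: "complex^'n^'n \<Rightarrow> complex^'n \<Rightarrow> complex" where
  "qform A x = (\<Sum>i\<in>UNIV. \<Sum>j\<in>UNIV. cnj (x $ i) * A $ i $ j * x $ j)"

definition hermitian_mat :: "complex^'n^'n \<Rightarrow> bool" where
  "hermitian_mat A \<longleftrightarrow> adjoint_mat A = A"

definition psd_mat :: "complex^'n^'n \<Rightarrow> bool" where
  "psd_mat A \<longleftrightarrow> hermitian_mat A \<and> (\<forall>x. 0 \<le> Re (qform A x))"

definition pd_mat :: "complex^'n^'n \<Rightarrow> bool" where
  "pd_mat A \<longleftrightarrow> hermitian_mat A \<and> (\<forall>x. x \<noteq> 0 \<longrightarrow> 0 < Re (qform A x))"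

definition pd_sqrt :: "complex^'n^'n \<Rightarrow> complex^'n^'n" where
  "pd_sqrt P = (THE S. pd_mat S \<and> S ** S = P)"

definition block_mat :: "complex^'m^'m \<Rightarrow> complex^'k^'m \<Rightarrow> complex^'m^'k \<Rightarrow> complex^'k^'k
    \<Rightarrow> complex^('m + 'k)^('m + 'k)" where
  "block_mat A B C D = (\<chi> i j. case i of
      Inl a \<Rightarrow> (case j of Inl b \<Rightarrow> A $ a $ b | Inr b \<Rightarrow> B $ a $ b)
    | Inr a \<Rightarrow> (case j of Inl b \<Rightarrow> C $ a $ b | Inr b \<Rightarrow> D $ a $ b))"

definition resolvent_set :: "complex^'n^'n \<Rightarrow> complex set" where
  "resolvent_set H = {z. invertible (H - mat z)}"

end

theory Submission
  imports Defs
begin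


definition cinner :: "complex^'n \<Rightarrow> complex^'n \<Rightarrow> complex" where
  "cinner x y = (\<Sum>i\<in>UNIV. cnj (x$i) * y$i)"

lemma qform_cinner: "qform A x = cinner x (A *v x)"
  unfolding qform_def cinner_def matrix_vector_mult_def
  by (simp add: sum_distrib_left mult.assoc)

lemma cinner_adj: "cinner (M *v x) y = cinner x (adjoint_mat M *v y)"
proof -
  have "cinner (M *v x) y = (\<Sum>i\<in>UNIV. \<Sum>j\<in>UNIV. cnj (M$i$j) * cnj (x$j) * y$i)"
    unfolding cinner_def matrix_vector_mult_def by (simp add: cnj_sum sum_distrib_right)
  also have "\<dots> = (\<Sum>j\<in>UNIV. \<Sum>i\<in>UNIV. cnj (M$i$j) * cnj (x$j) * y$i)"
    by (rule sum.swap)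
  also have "\<dots> = cinner x (adjoint_mat M *v y)"
    unfolding cinner_def matrix_vector_mult_def adjoint_mat_def
    by (simp add: sum_distrib_left mult_ac)
  finally show ?thesis by simp
qed

lemma cinner_add_right: "cinner x (y + z) = cinner x y + cinner x z"
  unfolding cinner_def by (simp add: distrib_left sum.distrib)
lemma cinner_diff_right: "cinner x (y - z) = cinner x y - cinner x z"
  unfolding cinner_def by (simp add: right_diff_distrib sum_subtractf)
lemma cinner_add_left: "cinner (x + y) z = cinner x z + cinner y z"
  unfolding cinner_def by (simp add: distrib_right sum.distrib)
lemma cinner_diff_left: "cinner (x - y) z = cinner x z - cinner y z"
  unfolding cinner_def by (simp add: left_diff_distrib sum_subtractf)
lemma cinner_scale_right: "cinner x (c *s y) = c * cinner x y"
  unfolding cinner_def by (simp add: sum_distrib_left mult_ac)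
lemma cinner_scale_left: "cinner (c *s x) y = cnj c * cinner x y"
  unfolding cinner_def by (simp add: sum_distrib_left mult_ac)
lemma cinner_zero_right[simp]: "cinner x 0 = 0"
  unfolding cinner_def by simp
lemma cinner_zero_left[simp]: "cinner 0 x = 0"
  unfolding cinner_def by simp
lemma cinner_commute: "cinner y x = cnj (cinner x y)"
  unfolding cinner_def by (simp add: cnj_sum mult_ac)
lemma cinner_sum_right: "cinner x (\<Sum>e\<in>E. f e) = (\<Sum>e\<in>E. cinner x (f e))"
  unfolding cinner_def by (simp add: sum_distrib_left sum.swap[of _ E UNIV])
lemma cinner_sum_left: "cinner (\<Sum>e\<in>E. f e) x = (\<Sum>e\<in>E. cinner (f e) x)"
  unfolding cinner_def by (simp add: cnj_sum sum_distrib_right sum.swap[of _ E UNIV])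
lemma Re_cinner: "Re (cinner x y) = inner x y"
  unfolding cinner_def inner_vec_def inner_complex_def by (simp add: Re_sum)
lemma Im_cinner_self: "Im (cinner x x) = 0"
  unfolding cinner_def by (simp add: Im_sum)
lemma cinner_self: "cinner x x = of_real (norm x ^ 2)"
  by (rule complex_eqI) (simp_all add: Re_cinner Im_cinner_self power2_norm_eq_inner)
lemma cinner_self_eq_0: "cinner x x = 0 \<longleftrightarrow> x = 0"
  by (simp add: cinner_self)

lemma mv_scale: fixes M :: "complex^'n^'m" shows "M *v (c *s x) = c *s (M *v x)"
  by (simp add: vec_eq_iff matrix_vector_mult_def sum_distrib_left mult_ac)
lemma mv_sum: fixes M :: "complex^'n^'m" shows "M *v (\<Sum>e\<in>E. f e) = (\<Sum>e\<in>E. M *v f e)"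
  by (simp add: vec_eq_iff matrix_vector_mult_def sum_component sum_distrib_left sum.swap[of _ E UNIV])
lemma mv_add: fixes M :: "complex^'n^'m" shows "M *v (x + y) = M *v x + M *v y"
  by (simp add: matrix_vector_right_distrib)
lemma mv_diff: fixes M :: "complex^'n^'m" shows "M *v (x - y) = M *v x - M *v y"
  by (simp add: vec_eq_iff matrix_vector_mult_def sum_subtractf right_diff_distrib)
lemma mv_mat: fixes c :: complex shows "mat c *v x = c *s x"
  by (simp add: vec_eq_iff matrix_vector_mult_def mat_def if_distrib if_distribR sum.delta cong: if_cong)
lemma mat_minus_mv: fixes M :: "complex^'n^'m" shows "(M - N) *v x = M *v x - N *v x"
  by (simp add: vec_eq_iff matrix_vector_mult_def sum_subtractf left_diff_distrib)

lemma herm_adj: "hermitian_mat M \<Longrightarrow> cinner (M *v x) y = cinner x (M *v y)"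
  by (simp add: cinner_adj hermitian_mat_def)

lemma herm_qform_real: "hermitian_mat M \<Longrightarrow> Im (qform M x) = 0"
proof -
  assume h: "hermitian_mat M"
  have "qform M x = cnj (qform M x)"
    unfolding qform_cinner using herm_adj[OF h, of x x] cinner_commute[of "M *v x" x] by simp
  then have "Im (qform M x) = - Im (qform M x)" by (metis cnj.simps(2))
  then show ?thesis by simp
qed



definition sa :: "complex^'n^'n \<Rightarrow> bool" where
  "sa M \<longleftrightarrow> (\<forall>a b. cinner (M *v a) b = cinner a (M *v b))"

lemma herm_sa: "hermitian_mat M \<Longrightarrow> sa M"
  by (simp add: sa_def herm_adj)

lemma scaleR_smult: "scaleR r (x :: complex^'n) = (of_real r :: complex) *s x"
  unfolding vec_eq_iff vector_scaleR_component vector_scalar_mult_def by (simp add: scaleR_conv_of_real)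

lemma qform_scale: "qform M (c *s x) = cnj c * c * qform M x"
  by (simp add: qform_cinner mv_scale cinner_scale_left cinner_scale_right)

lemma psd_zero:
  fixes M :: "complex^'n^'n"
  assumes s: "sa M" and pos: "\<forall>t::real. 0 \<le> Re (qform M (y + (of_real t) *s x))"
    and z: "Re (qform M x) = 0"
  shows "Re (cinner y (M *v x)) = 0"
proof (rule ccontr)
  define a where "a = Re (cinner y (M *v x))"
  assume "Re (cinner y (M *v x)) \<noteq> 0"
  hence a0: "a \<noteq> 0" by (simp add: a_def)
  have expand: "Re (qform M (y + (of_real t) *s x)) = Re (qform M y) + 2 * t * a + t^2 * Re (qform M x)" for t :: real
  proof -
    have c1: "cinner x (M *v y) = cnj (cinner y (M *v x))"
      using s unfolding sa_def by (metis cinner_commute)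
    have "qform M (y + (of_real t) *s x) = qform M y + of_real t * cinner y (M *v x)
        + of_real t * cinner x (M *v y) + of_real t * of_real t * qform M x"
      by (simp add: qform_cinner mv_add mv_scale cinner_add_left cinner_add_right
          cinner_scale_left cinner_scale_right algebra_simps)
    then show ?thesis using c1 by (simp add: a_def power2_eq_square)
  qed
  define t where "t = - (\<bar>Re (qform M y)\<bar> + 1) / (2 * a)"
  have "2 * t * a = - (\<bar>Re (qform M y)\<bar> + 1)" using a0 by (simp add: t_def)
  hence "Re (qform M (y + (of_real t) *s x)) < 0" using expand[of t] z by simp
  with pos show False by (meson not_le)
qed

lemma closed_W: "closed {x::complex^'n. \<forall>e\<in>E. cinner e x = 0}"
proof -
  have "{x::complex^'n. \<forall>e\<in>E. cinner e x = 0} = (\<Inter>e\<in>E. {x. cinner e x = 0})" by auto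
  moreover have "closed {x::complex^'n. cinner e x = 0}" for e
    unfolding cinner_def by (intro closed_Collect_eq continuous_intros)
  ultimately show ?thesis by auto
qed

lemma cont_qform: "continuous_on S (\<lambda>x. Re (qform M x))"
  unfolding qform_def by (intro continuous_intros)



lemma qform_zero[simp]: "qform M 0 = 0"
  by (simp add: qform_cinner)

lemma qform_scaleR: "qform M (scaleR r x) = of_real (r^2) * qform M x"
  by (simp add: scaleR_smult qform_scale power2_eq_square)

lemma cinner_scaleR_right: "cinner e (scaleR r x) = of_real r * cinner e x"
  by (simp add: scaleR_smult cinner_scale_right)

lemma sa_shift:
  assumes "sa P" shows "sa (mat (of_real l) - P)"
  using assms unfolding sa_def
  by (simp add: mat_minus_mv mv_mat cinner_diff_left cinner_diff_right cinner_scale_left cinner_scale_right)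

lemma qform_shift: "qform (mat (of_real l) - P) z = of_real (l * norm z ^ 2) - qform P z"
  by (simp add: qform_cinner mat_minus_mv mv_mat cinner_diff_right cinner_scale_right cinner_self)

lemma max_eigen:
  fixes P :: "complex^'n^'n"
  assumes h: "sa P"
    and eig: "\<forall>e\<in>E. \<exists>l::real. P *v e = of_real l *s e"
    and xW: "\<forall>e\<in>E. cinner e x = 0" and x0: "x \<noteq> 0"
  shows "\<exists>v. (\<forall>e\<in>E. cinner e v = 0) \<and> norm v = 1 \<and> (\<exists>l::real. P *v v = of_real l *s v \<and>
     (\<forall>z. (\<forall>e\<in>E. cinner e z = 0) \<longrightarrow> Re (qform P z) \<le> l * norm z ^ 2))"
proof -
  define W where "W = {x::complex^'n. \<forall>e\<in>E. cinner e x = 0}"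
  define K where "K = W \<inter> sphere 0 1"
  have Wscale: "z \<in> W \<Longrightarrow> scaleR r z \<in> W" for z r
    by (simp add: W_def cinner_scaleR_right)
  have Wadd: "z \<in> W \<Longrightarrow> y \<in> W \<Longrightarrow> y + z \<in> W" for z y
    by (simp add: W_def cinner_add_right)
  have Wsmul: "z \<in> W \<Longrightarrow> c *s z \<in> W" for z c
    by (simp add: W_def cinner_scale_right)
  have cK: "compact K" unfolding K_def W_def
    by (intro closed_Int_compact closed_W compact_sphere)
  have unit: "z \<in> W \<Longrightarrow> z \<noteq> 0 \<Longrightarrow> scaleR (1 / norm z) z \<in> K" for z
    using Wscale by (simp add: K_def)
  have "K \<noteq> {}" using unit[of x] xW x0 by (auto simp: W_def)
  then obtain v where vK: "v \<in> K" and vmax: "\<forall>y\<in>K. Re (qform P y) \<le> Re (qform P v)"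
    using continuous_attains_sup[OF cK _ cont_qform] by blast
  define l where "l = Re (qform P v)"
  have vW: "v \<in> W" and nv: "norm v = 1" using vK by (auto simp: K_def)
  have bound: "Re (qform P z) \<le> l * norm z ^ 2" if zW: "z \<in> W" for z
  proof (cases "z = 0")
    case True then show ?thesis by simp
  next
    case False
    have "Re (qform P (scaleR (1 / norm z) z)) \<le> l" using vmax unit[OF zW False] by (simp add: l_def)
    hence "(1 / norm z)^2 * Re (qform P z) \<le> l" by (simp add: qform_scaleR)
    hence "Re (qform P z) \<le> l * norm z ^ 2" using False
      by (simp add: field_simps power2_eq_square)
    then show ?thesis .
  qed
  define M where "M = mat (of_real l) - P"
  have saM: "sa M" unfolding M_def by (rule sa_shift[OF h])
  have qM: "Re (qform M z) = l * norm z ^ 2 - Re (qform P z)" for z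
    by (simp add: M_def qform_shift)
  have MvW: "M *v v \<in> W"
  proof -
    have "cinner e (M *v v) = 0" if e: "e \<in> E" for e
    proof -
      obtain le :: real where le: "P *v e = of_real le *s e" using eig e by blast
      have ev: "cinner e v = 0" using vW e by (simp add: W_def)
      have "cinner e (P *v v) = cinner (P *v e) v" using h by (simp add: sa_def)
      also have "\<dots> = 0" by (simp add: le cinner_scale_left ev)
      finally show ?thesis by (simp add: M_def mat_minus_mv mv_mat cinner_diff_right cinner_scale_right ev)
    qed
    then show ?thesis by (simp add: W_def)
  qed
  have pos: "\<forall>t::real. 0 \<le> Re (qform M (M *v v + (of_real t) *s v))"
  proof
    fix t :: real
    have "M *v v + (of_real t) *s v \<in> W" using MvW vW Wadd Wsmul by blast
    then show "0 \<le> Re (qform M (M *v v + (of_real t) *s v))" using bound by (simp add: qM)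
  qed
  have z: "Re (qform M v) = 0" by (simp add: qM nv l_def)
  have "Re (cinner (M *v v) (M *v v)) = 0" by (rule psd_zero[OF saM pos z])
  hence "M *v v = 0" by (simp add: cinner_self)
  hence Pv: "P *v v = of_real l *s v" by (simp add: M_def mat_minus_mv mv_mat)
  show ?thesis using vW nv Pv bound by (auto simp: W_def)
qed



definition good :: "complex^'n^'n \<Rightarrow> (complex^'n) set \<Rightarrow> bool" where
  "good P E \<longleftrightarrow> finite E \<and> (\<forall>e\<in>E. norm e = 1 \<and> (\<exists>l::real. P *v e = of_real l *s e))
     \<and> (\<forall>e\<in>E. \<forall>f\<in>E. e \<noteq> f \<longrightarrow> cinner e f = 0)"

lemma good_card:
  fixes E :: "(complex^'n) set"
  assumes "good P E" shows "card E < DIM(complex^'n) + 1"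
proof -
  have "pairwise orthogonal E"
    using assms unfolding good_def pairwise_def orthogonal_def
    by (metis Re_cinner zero_complex.simps(1))
  moreover have "0 \<notin> E" using assms unfolding good_def by force
  ultimately have "independent E" by (rule pairwise_orthogonal_independent)
  then show ?thesis using independent_bound by fastforce
qed

lemma cinner_unit: "norm e = 1 \<Longrightarrow> cinner e e = 1"
  by (simp add: cinner_self)

lemma expansion_orth:
  assumes g: "good P E" and that: "f \<in> E"
  shows "cinner f (x - (\<Sum>e\<in>E. cinner e x *s e)) = 0"
proof -
  have fin: "finite E" using g by (simp add: good_def)
  have "(\<Sum>e\<in>E. cinner e x * cinner f e) = (\<Sum>e\<in>E. if e = f then cinner f x else 0)"
  proof (rule sum.cong)
    fix e assume e: "e \<in> E"
    show "cinner e x * cinner f e = (if e = f then cinner f x else 0)"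
    proof (cases "e = f")
      case True then show ?thesis using g that unfolding good_def by (simp add: cinner_unit)
    next
      case False then show ?thesis using g that e unfolding good_def by auto
    qed
  qed simp
  also have "\<dots> = cinner f x" using that fin by simp
  finally show ?thesis by (simp add: cinner_diff_right cinner_sum_right cinner_scale_right)
qed

lemma exists_basis:
  fixes P :: "complex^'n^'n"
  assumes h: "sa P"
  shows "\<exists>E. good P E \<and> (\<forall>x. x = (\<Sum>e\<in>E. cinner e x *s e))"
proof -
  have "good P {}" by (simp add: good_def)
  then obtain E where gE: "good P E" and mx: "\<forall>F. good P F \<longrightarrow> card F \<le> card E"
    using ex_has_greatest_nat[of "good P" "{}" card "DIM(complex^'n) + 1"] good_card by blast
  have fin: "finite E" using gE by (simp add: good_def)
  have "x = (\<Sum>e\<in>E. cinner e x *s e)" for x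
  proof (rule ccontr)
    define r where "r = x - (\<Sum>e\<in>E. cinner e x *s e)"
    assume "x \<noteq> (\<Sum>e\<in>E. cinner e x *s e)"
    hence r0: "r \<noteq> 0" by (simp add: r_def)
    have rW: "\<forall>f\<in>E. cinner f r = 0" using expansion_orth[OF gE] by (simp add: r_def)
    have eig: "\<forall>e\<in>E. \<exists>l::real. P *v e = of_real l *s e" using gE by (simp add: good_def)
    obtain v l where vW: "\<forall>e\<in>E. cinner e v = 0" and nv: "norm v = 1"
      and Pv: "P *v v = of_real l *s v"
      using max_eigen[OF h eig rW r0] by blast
    have vE: "v \<notin> E" using vW nv cinner_unit by fastforce
    have "good P (insert v E)"
      using gE vW nv Pv unfolding good_def
      by (auto simp: fin, metis cinner_commute complex_cnj_zero)
    hence "card (insert v E) \<le> card E" using mx by blast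
    with fin vE show False by simp
  qed
  then show ?thesis using gE by blast
qed



lemma sqrt_exists:
  fixes P :: "complex^'n^'n"
  assumes pd: "pd_mat P"
  shows "\<exists>S. pd_mat S \<and> S ** S = P"
proof -
  have h: "sa P" using pd by (simp add: pd_mat_def herm_sa)
  obtain E where gE: "good P E" and exp: "\<forall>x. x = (\<Sum>e\<in>E. cinner e x *s e)"
    using exists_basis[OF h] by blast
  have fin: "finite E" using gE by (simp add: good_def)
  have un: "e \<in> E \<Longrightarrow> cinner e e = 1" for e using gE by (simp add: good_def cinner_unit)
  have orth: "e \<in> E \<Longrightarrow> f \<in> E \<Longrightarrow> e \<noteq> f \<Longrightarrow> cinner e f = 0" for e f using gE by (simp add: good_def)
  define lam where "lam e = (SOME l::real. P *v e = of_real l *s e)" for e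
  have Pe: "e \<in> E \<Longrightarrow> P *v e = of_real (lam e) *s e" for e
    using gE unfolding good_def lam_def by (metis (mono_tags, lifting) someI_ex)
  have lpos: "e \<in> E \<Longrightarrow> 0 < lam e" for e
  proof -
    assume e: "e \<in> E"
    have "e \<noteq> 0" using un[OF e] by auto
    hence "0 < Re (qform P e)" using pd by (simp add: pd_mat_def)
    also have "qform P e = of_real (lam e)" by (simp add: qform_cinner Pe[OF e] cinner_scale_right un[OF e])
    finally show ?thesis by simp
  qed
  define s where "s e = (of_real (sqrt (lam e)) :: complex)" for e
  define S :: "complex^'n^'n" where "S = (\<chi> i j. \<Sum>e\<in>E. s e * e$i * cnj (e$j))"
  have Sv: "S *v x = (\<Sum>e\<in>E. (s e * cinner e x) *s e)" for x
  proof -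
    have "(S *v x) $ i = (\<Sum>e\<in>E. (s e * cinner e x) *s e) $ i" for i
    proof -
      have "(S *v x) $ i = (\<Sum>j\<in>UNIV. \<Sum>e\<in>E. s e * e$i * cnj (e$j) * x$j)"
        by (simp add: S_def matrix_vector_mult_def sum_distrib_right)
      also have "\<dots> = (\<Sum>e\<in>E. \<Sum>j\<in>UNIV. s e * e$i * cnj (e$j) * x$j)" by (rule sum.swap)
      also have "\<dots> = (\<Sum>e\<in>E. (s e * cinner e x) *s e) $ i"
        by (simp add: sum_component cinner_def sum_distrib_left sum_distrib_right mult_ac)
      finally show ?thesis .
    qed
    then show ?thesis by (simp add: vec_eq_iff)
  qed
  have herm: "hermitian_mat S"
    unfolding hermitian_mat_def adjoint_mat_def S_def
    by (simp add: vec_eq_iff cnj_sum s_def mult_ac)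
  have cS: "f \<in> E \<Longrightarrow> cinner f (S *v x) = s f * cinner f x" for f x
  proof -
    assume f: "f \<in> E"
    have "cinner f (S *v x) = (\<Sum>e\<in>E. s e * cinner e x * cinner f e)"
      by (simp add: Sv cinner_sum_right cinner_scale_right)
    also have "\<dots> = (\<Sum>e\<in>E. if e = f then s f * cinner f x else 0)"
      by (rule sum.cong) (auto simp: un f orth)
    also have "\<dots> = s f * cinner f x" using fin f by simp
    finally show ?thesis .
  qed
  have ss: "e \<in> E \<Longrightarrow> s e * s e = of_real (lam e)" for e
    using lpos[of e] by (simp add: s_def of_real_mult[symmetric] del: of_real_mult)
  have SSv: "(S ** S) *v x = P *v x" for x
  proof -
    have "(S ** S) *v x = S *v (S *v x)" by (simp add: matrix_vector_mul_assoc)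
    also have "\<dots> = (\<Sum>e\<in>E. (s e * (s e * cinner e x)) *s e)"
      by (simp add: Sv[of "S *v x"] cS cong: sum.cong)
    also have "\<dots> = (\<Sum>e\<in>E. cinner e x *s (P *v e))"
      by (rule sum.cong) (simp_all add: Pe ss mult_ac flip: ss)
    also have "\<dots> = P *v (\<Sum>e\<in>E. cinner e x *s e)" by (simp add: mv_sum mv_scale)
    also have "\<dots> = P *v x" using exp[rule_format, of x, symmetric] by simp
    finally show ?thesis .
  qed
  have SS: "S ** S = P" using SSv matrix_eq by blast
  have qS: "Re (qform S x) = (\<Sum>e\<in>E. sqrt (lam e) * (cmod (cinner e x))^2)" for x
  proof -
    have "qform S x = (\<Sum>e\<in>E. s e * cinner e x * cinner x e)"
      by (simp add: qform_cinner Sv cinner_sum_right cinner_scale_right mult_ac)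
    also have "\<dots> = (\<Sum>e\<in>E. of_real (sqrt (lam e) * (cmod (cinner e x))^2))"
    proof (rule sum.cong)
      fix e assume "e \<in> E"
      have "cinner e x * cinner x e = of_real ((cmod (cinner e x))^2)"
        by (metis cinner_commute complex_norm_square)
      then show "s e * cinner e x * cinner x e = of_real (sqrt (lam e) * (cmod (cinner e x))^2)"
        by (simp add: s_def mult.assoc)
    qed simp
    finally show ?thesis by (simp add: Re_sum)
  qed
  have pdS: "pd_mat S"
    unfolding pd_mat_def
  proof (intro conjI herm allI impI)
    fix x :: "complex^'n" assume x0: "x \<noteq> 0"
    have "\<exists>e\<in>E. cinner e x \<noteq> 0"
    proof (rule ccontr)
      assume "\<not> ?thesis"
      hence "(\<Sum>e\<in>E. cinner e x *s e) = 0" by simp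
      with exp x0 show False by metis
    qed
    then obtain e where e: "e \<in> E" and ne: "cinner e x \<noteq> 0" by blast
    have "0 < sqrt (lam e) * (cmod (cinner e x))^2" using lpos[OF e] ne by simp
    also have "\<dots> \<le> (\<Sum>e\<in>E. sqrt (lam e) * (cmod (cinner e x))^2)"
      by (rule member_le_sum[OF e _ fin]) (simp add: less_imp_le lpos)
    finally show "0 < Re (qform S x)" by (simp add: qS)
  qed
  show ?thesis using pdS SS by blast
qed



lemma sa_diff: "sa S \<Longrightarrow> sa T \<Longrightarrow> sa (S - T)"
  unfolding sa_def by (simp add: mat_minus_mv cinner_diff_left cinner_diff_right)

lemma qform_diff: "qform (S - T) z = qform S z - qform T z"
  by (simp add: qform_cinner mat_minus_mv cinner_diff_right)

lemma exists_nonzero: "\<exists>x::complex^'n. x \<noteq> 0"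
  by (rule exI[of _ "\<chi> i. 1"]) (simp add: vec_eq_iff)

lemma sqrt_unique_aux:
  fixes S T :: "complex^'n^'n"
  assumes pS: "pd_mat S" and pT: "pd_mat T" and eq: "S ** S = T ** T"
  shows "Re (qform (S - T) z) \<le> 0"
proof -
  have sS: "sa S" and sT: "sa T" using pS pT by (simp_all add: pd_mat_def herm_sa)
  define D where "D = S - T"
  have sD: "sa D" unfolding D_def by (rule sa_diff[OF sS sT])
  obtain x :: "complex^'n" where x0: "x \<noteq> 0" using exists_nonzero by blast
  obtain v l where nv: "norm v = 1" and Dv: "D *v v = of_real l *s v"
    and bd: "\<forall>z. Re (qform D z) \<le> l * norm z ^ 2"
    using max_eigen[OF sD, of "{}" x] x0 by auto
  have v0: "v \<noteq> 0" using nv by auto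
  have "S *v (S *v v) - T *v (T *v v) = S *v (D *v v) + D *v (T *v v)"
    by (simp add: D_def mat_minus_mv mv_diff)
  moreover have "S *v (S *v v) = T *v (T *v v)" using eq by (simp add: matrix_vector_mul_assoc)
  ultimately have "0 = cinner v (S *v (D *v v)) + cinner v (D *v (T *v v))"
    by (simp add: cinner_add_right[symmetric])
  also have "cinner v (D *v (T *v v)) = cinner (D *v v) (T *v v)" using sD by (simp add: sa_def)
  also have "\<dots> = of_real l * qform T v" by (simp add: Dv cinner_scale_left qform_cinner)
  also have "cinner v (S *v (D *v v)) = of_real l * qform S v" by (simp add: Dv mv_scale cinner_scale_right qform_cinner)
  finally have "0 = of_real l * (qform S v + qform T v)" by (simp add: algebra_simps)
  hence "0 = Re (of_real l * (qform S v + qform T v))" by (metis zero_complex.sel(1))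
  hence "0 = l * (Re (qform S v) + Re (qform T v))" by simp
  moreover have "0 < Re (qform S v) + Re (qform T v)" using pS pT v0 by (simp add: pd_mat_def add_pos_pos)
  ultimately have "l = 0" by simp
  then show ?thesis using bd by (simp add: D_def)
qed

lemma sqrt_unique:
  fixes S T :: "complex^'n^'n"
  assumes pS: "pd_mat S" and pT: "pd_mat T" and eq: "S ** S = T ** T"
  shows "S = T"
proof -
  have sS: "sa S" and sT: "sa T" using pS pT by (simp_all add: pd_mat_def herm_sa)
  define D where "D = S - T"
  have sD: "sa D" unfolding D_def by (rule sa_diff[OF sS sT])
  have z: "Re (qform D z) = 0" for z
  proof -
    have a: "Re (qform D z) \<le> 0" unfolding D_def by (rule sqrt_unique_aux[OF pS pT eq])
    have "Re (qform (T - S) z) \<le> 0" by (rule sqrt_unique_aux[OF pT pS eq[symmetric]])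
    hence "0 \<le> Re (qform D z)" by (simp add: D_def qform_diff)
    with a show ?thesis by simp
  qed
  have "D *v y = 0" for y
  proof -
    have "Re (cinner (D *v y) (D *v y)) = 0"
      by (rule psd_zero[OF sD]) (simp_all add: z)
    then show ?thesis by (simp add: cinner_self)
  qed
  hence "S *v y = T *v y" for y by (simp add: D_def mat_minus_mv)
  then show ?thesis using matrix_eq by blast
qed

lemma pd_sqrt_prop:
  fixes P :: "complex^'n^'n"
  assumes "pd_mat P"
  shows "pd_mat (pd_sqrt P) \<and> pd_sqrt P ** pd_sqrt P = P"
proof -
  have "\<exists>!S. pd_mat S \<and> S ** S = P"
    using sqrt_exists[OF assms] sqrt_unique by metis
  then show ?thesis unfolding pd_sqrt_def by (rule theI')
qed



lemma sum_UNIV_Plus: "(\<Sum>p\<in>(UNIV::('a::finite + 'b::finite) set). g p) = (\<Sum>a\<in>UNIV. g (Inl a)) + (\<Sum>b\<in>UNIV. g (Inr b))"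
  using sum.Plus[of "UNIV::'a set" "UNIV::'b set" g] by (simp add: o_def)

lemma block_Inl: "(block_mat A B C D *v z) $ Inl i = (A *v (\<chi> a. z $ Inl a)) $ i + (B *v (\<chi> b. z $ Inr b)) $ i"
  by (simp add: matrix_vector_mult_def block_mat_def sum_UNIV_Plus)

lemma block_Inr: "(block_mat A B C D *v z) $ Inr i = (C *v (\<chi> a. z $ Inl a)) $ i + (D *v (\<chi> b. z $ Inr b)) $ i"
  by (simp add: matrix_vector_mult_def block_mat_def sum_UNIV_Plus)

lemma inj_invertible:
  fixes M :: "complex^'n^'n"
  assumes "inj ((*v) M)" shows "invertible M"
  using assms det_nz_iff_inj_gen[OF matrix_vector_mul_linear_gen, of M] invertible_det_nz[of M]
  by (simp add: matrix_of_matrix_vector_mul)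

lemma adjoint_mat_adjoint[simp]: "adjoint_mat (adjoint_mat B) = B"
  by (simp add: adjoint_mat_def vec_eq_iff)

lemma cinner_adj2: "cinner x (B *v w) = cinner (adjoint_mat B *v x) w"
  using cinner_adj[of "adjoint_mat B" x w] by simp

lemma BBstar_pd:
  fixes B :: "complex^'k^'m"
  assumes inj: "\<forall>x. adjoint_mat B *v x = 0 \<longrightarrow> x = 0"
  shows "pd_mat (B ** adjoint_mat B)"
  unfolding pd_mat_def hermitian_mat_def
proof (intro conjI allI impI)
  show "adjoint_mat (B ** adjoint_mat B) = B ** adjoint_mat B"
    by (simp add: adjoint_mat_def vec_eq_iff matrix_matrix_mult_def cnj_sum mult_ac)
  fix x :: "complex^'m" assume "x \<noteq> 0"
  hence "adjoint_mat B *v x \<noteq> 0" using inj by blast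
  moreover have "qform (B ** adjoint_mat B) x = cinner (adjoint_mat B *v x) (adjoint_mat B *v x)"
    by (simp add: qform_cinner matrix_vector_mul_assoc[symmetric] cinner_adj2)
  ultimately show "0 < Re (qform (B ** adjoint_mat B) x)" by (simp add: cinner_self)
qed

lemma norm_smult_real: "norm ((of_real r :: complex) *s (y::complex^'n)) = \<bar>r\<bar> * norm y"
  by (simp flip: scaleR_smult)

lemma key_ineq:
  fixes nx ny alpha :: real
  assumes "0 < nx" "0 \<le> ny" "0 \<le> alpha" "ny^2 - alpha * nx * ny - nx^2 \<le> 0"
  shows "2 * ny \<le> (alpha + sqrt (alpha^2 + 4)) * nx"
proof (rule ccontr)
  define r where "r = sqrt (alpha^2 + 4)"
  have r0: "0 \<le> r" by (simp add: r_def)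
  have r2: "r^2 = alpha^2 + 4" by (simp add: r_def)
  assume "\<not> ?thesis"
  hence h: "r * nx < 2 * ny - alpha * nx" by (simp add: r_def algebra_simps)
  have "0 \<le> r * nx" using r0 assms by simp
  hence "(r * nx)^2 < (2 * ny - alpha * nx)^2" using h by (simp add: power_strict_mono)
  hence "(alpha^2 + 4) * nx^2 < (2 * ny - alpha * nx)^2" by (simp add: power_mult_distrib r2)
  hence "0 < 4 * (ny^2 - alpha * nx * ny - nx^2)" by (simp add: power2_eq_square algebra_simps)
  with assms show False by simp
qed



lemma ratio_bdd:
  fixes A S :: "complex^'m^'m"
  assumes pS: "pd_mat S"
  shows "bdd_above {Re (qform A x) / Re (qform S x) | x. x \<noteq> 0}"
proof -
  define f where "f u = Re (qform A u) / Re (qform S u)" for u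
  have "continuous_on (sphere 0 1) f"
    unfolding f_def
  proof (intro continuous_on_divide cont_qform ballI)
    fix u :: "complex^'m" assume "u \<in> sphere 0 1"
    hence "u \<noteq> 0" by auto
    thus "Re (qform S u) \<noteq> 0" using pS unfolding pd_mat_def by (metis less_irrefl)
  qed
  hence "compact (f ` sphere 0 1)" by (intro compact_continuous_image compact_sphere)
  hence b: "bdd_above (f ` sphere 0 1)" by (intro bounded_imp_bdd_above compact_imp_bounded)
  have "{Re (qform A x) / Re (qform S x) | x. x \<noteq> 0} \<subseteq> f ` sphere 0 1"
  proof
    fix t assume "t \<in> {Re (qform A x) / Re (qform S x) | x. x \<noteq> 0}"
    then obtain x where x0: "x \<noteq> 0" and t: "t = Re (qform A x) / Re (qform S x)" by blast
    define u where "u = scaleR (1 / norm x) x"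
    have "u \<in> sphere 0 1" using x0 by (simp add: u_def)
    moreover have "f u = t" using x0
      by (simp add: f_def u_def qform_scaleR t)
    ultimately show "t \<in> f ` sphere 0 1" by blast
  qed
  then show ?thesis by (rule bdd_above_mono[OF b])
qed

theorem mainTheorem10:
  fixes A :: "complex^'m^'m" and B :: "complex^'k^'m" and lam alpha beta1 :: real
  assumes "psd_mat A"
    and "\<forall>x. adjoint_mat B *v x = 0 \<longrightarrow> x = 0"
    and "alpha = Sup {Re (qform A x) / Re (qform (pd_sqrt (B ** adjoint_mat B)) x) | x. x \<noteq> 0}"
    and "beta1 = Inf {norm (adjoint_mat B *v x) | x. norm x = 1}"
    and "- 2 * beta1 / (alpha + sqrt (alpha\<^sup>2 + 4)) < lam" and "lam < beta1" and "lam \<noteq> 0"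
  shows "complex_of_real lam \<in> resolvent_set (block_mat A B (adjoint_mat B) (0 :: complex^'k^'k))"
proof -
  note psdA = assms(1) and injB = assms(2) and alpha_def = assms(3) and beta_def = assms(4)
    and hyp1 = assms(5) and hyp2 = assms(6) and lam0 = assms(7)
  define H where "H = block_mat A B (adjoint_mat B) (0 :: complex^'k^'k)"
  define c where "c = complex_of_real lam"
  have c0: "c \<noteq> 0" using lam0 by (simp add: c_def)
  have ker: "z = 0" if hz: "(H - mat c) *v z = 0" for z
  proof -
    have Hz: "H *v z = c *s z" using hz by (simp add: mat_minus_mv mv_mat)
    define x where "x = (\<chi> a. z $ Inl a)"
    define y where "y = (\<chi> b. z $ Inr b)"
    have eq1: "A *v x + B *v y = c *s x"
    proof -
      have "(A *v x + B *v y) $ i = (c *s x) $ i" for i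
        using arg_cong[OF Hz, of "\<lambda>v. v $ Inl i"] unfolding H_def block_Inl
        by (simp add: x_def y_def)
      then show ?thesis by (simp add: vec_eq_iff)
    qed
    have eq2: "adjoint_mat B *v x = c *s y"
    proof -
      have "(adjoint_mat B *v x) $ i = (c *s y) $ i" for i
        using arg_cong[OF Hz, of "\<lambda>v. v $ Inr i"] unfolding H_def block_Inr
        by (simp add: x_def y_def)
      then show ?thesis by (simp add: vec_eq_iff)
    qed
    have zxy: "x = 0 \<Longrightarrow> y = 0 \<Longrightarrow> z = 0"
    proof -
      assume "x = 0" "y = 0"
      hence "z $ p = 0" for p by (cases p) (auto simp: x_def y_def vec_eq_iff)
      thus "z = 0" by (simp add: vec_eq_iff)
    qed
    have x0: "x = 0"
    proof (rule ccontr)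
      assume xn: "x \<noteq> 0"
      define nx where "nx = norm x"
      define ny where "ny = norm y"
      have nxp: "0 < nx" using xn by (simp add: nx_def)
      have nyp: "0 \<le> ny" by (simp add: ny_def)
      have nB: "norm (adjoint_mat B *v x) = \<bar>lam\<bar> * ny"
        by (simp add: eq2 c_def ny_def norm_smult_real)
      define a where "a = Re (qform A x)"
      have a0: "0 \<le> a" using psdA by (simp add: a_def psd_mat_def)
      have E1: "a + lam * ny^2 = lam * nx^2"
      proof -
        have "cinner x (A *v x + B *v y) = cinner x (c *s x)" by (simp add: eq1)
        hence "qform A x + cinner (adjoint_mat B *v x) y = c * cinner x x"
          by (simp add: cinner_add_right qform_cinner cinner_adj2 cinner_scale_right)
        hence "qform A x + c * cinner y y = c * cinner x x"
          by (simp add: eq2 cinner_scale_left c_def)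
        hence "Re (qform A x + c * cinner y y) = Re (c * cinner x x)" by simp
        thus ?thesis by (simp add: a_def c_def cinner_self nx_def ny_def)
      qed
      have bet: "beta1 * nx \<le> \<bar>lam\<bar> * ny"
      proof -
        define u where "u = scaleR (1 / nx) x"
        have nu: "norm u = 1" using nxp by (simp add: u_def nx_def)
        have "adjoint_mat B *v u = scaleR (1 / nx) (adjoint_mat B *v x)"
          by (simp add: u_def scaleR_smult mv_scale)
        hence Bu: "norm (adjoint_mat B *v u) = \<bar>lam\<bar> * ny / nx" using nxp by (simp add: nB)
        have "beta1 \<le> norm (adjoint_mat B *v u)" unfolding beta_def
          by (rule cInf_lower) (use nu in \<open>auto intro: bdd_belowI[of _ 0]\<close>)
        hence "beta1 \<le> \<bar>lam\<bar> * ny / nx" using Bu by simp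
        thus ?thesis using nxp by (simp add: pos_le_divide_eq)
      qed
      show False
      proof (cases "0 < lam")
        case True
        have "lam * ny^2 \<le> lam * nx^2" using E1 a0 by linarith
        hence "ny^2 \<le> nx^2" using True by simp
        hence "ny \<le> nx" by (rule power2_le_imp_le) (use nxp in simp)
        moreover have "lam * nx < beta1 * nx" using hyp2 nxp by simp
        ultimately have l1: "lam * ny \<le> lam * nx" using True by (simp add: mult_left_mono)
        have "beta1 * nx \<le> lam * ny" using bet True by simp
        then show False using l1 \<open>lam * nx < beta1 * nx\<close> by linarith
      next
        case False
        hence lneg: "lam < 0" using lam0 by simp
        define mu where "mu = - lam"
        have mup: "0 < mu" using lneg by (simp add: mu_def)
        define S where "S = pd_sqrt (B ** adjoint_mat B)"
        have pS: "pd_mat S" and SS: "S ** S = B ** adjoint_mat B"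
          using pd_sqrt_prop[OF BBstar_pd[OF injB]] by (simp_all add: S_def)
        define s where "s = Re (qform S x)"
        have sp: "0 < s" using pS xn by (simp add: s_def pd_mat_def)
        have mem: "a / s \<in> {Re (qform A x) / Re (qform (pd_sqrt (B ** adjoint_mat B)) x) | x. x \<noteq> 0}"
          unfolding a_def s_def S_def using xn by blast
        have bd: "bdd_above {Re (qform A x) / Re (qform (pd_sqrt (B ** adjoint_mat B)) x) | x. x \<noteq> 0}"
          using ratio_bdd[OF pS, of A] unfolding S_def .
        have "a / s \<le> alpha" unfolding alpha_def by (rule cSup_upper[OF mem bd])
        hence as: "a \<le> alpha * s" using sp by (simp add: pos_divide_le_eq)
        have "0 \<le> alpha * s" using as a0 by linarith
        hence al0: "0 \<le> alpha" using sp by (simp add: zero_le_mult_iff)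
        have "s = inner x (S *v x)" by (simp add: s_def qform_cinner Re_cinner)
        also have "\<dots> \<le> nx * norm (S *v x)" unfolding nx_def by (rule norm_cauchy_schwarz)
        finally have sle: "s \<le> nx * norm (S *v x)" .
        have "(norm (S *v x))^2 = (norm (adjoint_mat B *v x))^2"
        proof -
          have hS: "hermitian_mat S" using pS by (simp add: pd_mat_def)
          have "of_real ((norm (S *v x))^2) = cinner (S *v x) (S *v x)" by (simp add: cinner_self)
          also have "\<dots> = cinner x (S *v (S *v x))" by (rule herm_adj[OF hS])
          also have "\<dots> = cinner x (B *v (adjoint_mat B *v x))"
            by (simp add: matrix_vector_mul_assoc SS)
          also have "\<dots> = cinner (adjoint_mat B *v x) (adjoint_mat B *v x)" by (rule cinner_adj2)
          also have "\<dots> = of_real ((norm (adjoint_mat B *v x))^2)" by (simp add: cinner_self)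
          finally show ?thesis using of_real_eq_iff by blast
        qed
        hence "norm (S *v x) = norm (adjoint_mat B *v x)"
          by (rule power2_eq_imp_eq) simp_all
        hence nS: "norm (S *v x) = mu * ny" using nB lneg by (simp add: mu_def)
        have "a \<le> alpha * (nx * (mu * ny))"
          using as sle nS al0 by (metis mult_left_mono order_trans)
        moreover have "a = mu * ny^2 - mu * nx^2" using E1 by (simp add: mu_def)
        ultimately have "mu * (ny^2 - alpha * nx * ny - nx^2) \<le> 0"
          by (simp add: algebra_simps)
        hence q: "ny^2 - alpha * nx * ny - nx^2 \<le> 0" using mup
          by (simp add: mult_le_0_iff)
        define r where "r = sqrt (alpha^2 + 4)"
        have k: "2 * ny \<le> (alpha + r) * nx" using key_ineq[OF nxp nyp al0 q] by (simp add: r_def)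
        have "sqrt 4 \<le> r" unfolding r_def by (rule real_sqrt_le_mono) simp
        hence r2: "2 \<le> r" by simp
        have apos: "0 < alpha + r" using al0 r2 by simp
        have "- 2 * beta1 < lam * (alpha + r)" using hyp1 apos pos_divide_less_eq[OF apos, of "- 2 * beta1" lam] unfolding r_def by blast
        hence h3: "mu * (alpha + r) < 2 * beta1" by (simp add: mu_def algebra_simps)
        have "2 * beta1 * nx \<le> 2 * (mu * ny)" using bet lneg by (simp add: mu_def)
        also have "\<dots> \<le> mu * ((alpha + r) * nx)" using k mup by simp
        also have "\<dots> = (mu * (alpha + r)) * nx" by simp
        also have "\<dots> < (2 * beta1) * nx" using h3 nxp by simp
        finally show False by simp
      qed
    qed
    have "y = 0" using eq2 x0 c0 by (simp add: vec_eq_iff)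
    with x0 show ?thesis using zxy by simp
  qed
  have "inj ((*v) (H - mat c))"
  proof (rule injI)
    fix u v assume "(H - mat c) *v u = (H - mat c) *v v"
    hence "(H - mat c) *v (u - v) = 0" by (simp add: mv_diff)
    thus "u = v" using ker[of "u - v"] by simp
  qed
  hence "invertible (H - mat c)" by (rule inj_invertible)
  then show ?thesis by (simp add: resolvent_set_def H_def c_def)
qed

end
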